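(* Every absolutely summable subset of an abelian Hausdorff topological group is absolutely Cauchy summable. Conversely, in a complete abelian Hausdorff topological group every absolutely Cauchy summable subset is absolutely summable.
   Context: A subset $A$ of a topological group $G$ is absolutely summable if for every family $\{z_a:a\in A\}$ of integers there is $g\in G$ such that for every neighbourhood $U$ of $0$ there is a finite $F\subseteq A$ with $g-\sum_{a\in E}z_aa\in U$ for every finite $E\subseteq A$ containing $F$. $A$ is absolutely Cauchy summable if for every neighbourhood $U$ of $0$ there is a finite $F\subseteq A$ such that the subgroup generated by $A\setminus F$ is contained in $U$. *)

theory Defs
  imports "HOL-Analysis.Analysis"
begin

definition zmult :: "int \<Rightarrow> 'a::ab_group_add \<Rightarrow> 'a" where
  "zmult k a = (if 0 \<le> k then (\<Sum>i<nat k. a) else - (\<Sum>i<nat (- k). a))"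

definition is_subgroup_add :: "'a::ab_group_add set \<Rightarrow> bool" where
  "is_subgroup_add H \<longleftrightarrow> 0 \<in> H \<and> (\<forall>x\<in>H. \<forall>y\<in>H. x + y \<in> H) \<and> (\<forall>x\<in>H. - x \<in> H)"

definition subgroup_generated :: "'a::ab_group_add set \<Rightarrow> 'a set" where
  "subgroup_generated X = \<Inter>{H. is_subgroup_add H \<and> X \<subseteq> H}"

definition absolutely_summable :: "'a::topological_ab_group_add set \<Rightarrow> bool" where
  "absolutely_summable A \<longleftrightarrow>
     (\<forall>z :: 'a \<Rightarrow> int. \<exists>g. \<forall>U. open U \<and> 0 \<in> U \<longrightarrow>
        (\<exists>F. finite F \<and> F \<subseteq> A \<and>
           (\<forall>E. finite E \<and> F \<subseteq> E \<and> E \<subseteq> A \<longrightarrow> g - (\<Sum>a\<in>E. zmult (z a) a) \<in> U)))"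

definition absolutely_Cauchy_summable :: "'a::topological_ab_group_add set \<Rightarrow> bool" where
  "absolutely_Cauchy_summable A \<longleftrightarrow>
     (\<forall>U. open U \<and> 0 \<in> U \<longrightarrow>
        (\<exists>F. finite F \<and> F \<subseteq> A \<and> subgroup_generated (A - F) \<subseteq> U))"

definition group_Cauchy_filter :: "'a::topological_ab_group_add filter \<Rightarrow> bool" where
  "group_Cauchy_filter F \<longleftrightarrow>
     (\<forall>U. open U \<and> 0 \<in> U \<longrightarrow> eventually (\<lambda>(x, y). x - y \<in> U) (F \<times>\<^sub>F F))"

definition group_complete :: "'a::topological_ab_group_add itself \<Rightarrow> bool" where
  "group_complete _ \<longleftrightarrow>
     (\<forall>F :: 'a filter. F \<noteq> bot \<and> group_Cauchy_filter F \<longrightarrow> (\<exists>g. F \<le> nhds g))"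

end

theory Submission
  imports Defs
begin

lemma zmult_0[simp]: "zmult 0 a = 0" by (simp add: zmult_def)
lemma zmult_1[simp]: "zmult 1 a = a" by (simp add: zmult_def)

lemma zmult_succ: "zmult (k+1) a = zmult k a + a"
proof (cases "k \<ge> 0")
  case True
  then have "nat (k+1) = Suc (nat k)" by simp
  then show ?thesis using True by (simp add: zmult_def)
next
  case False
  then obtain j where j: "nat (-k) = Suc j" by (metis gr0_implies_Suc nat_0_iff not_le neg_0_less_iff_less zero_less_nat_eq)
  then have j2: "nat (-(k+1)) = j" by simp
  show ?thesis
  proof (cases "k+1 \<ge> 0")
    case True
    then have "k = -1" using False by simp
    then show ?thesis by (simp add: zmult_def)
  next
    case False2: False
    then show ?thesis using False j j2 by (simp add: zmult_def)
  qed
qed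

lemma zmult_add: "zmult (m+n) a = zmult m a + zmult n a"
proof (induction n rule: int_induct[where k=0])
  case base then show ?case by simp
next
  case (step1 i)
  have "zmult (m + (i+1)) a = zmult ((m+i)+1) a" by (simp add: add.assoc)
  also have "\<dots> = zmult (m+i) a + a" by (rule zmult_succ)
  also have "\<dots> = zmult m a + zmult (i+1) a" using step1 by (simp add: zmult_succ)
  finally show ?case .
next
  case (step2 i)
  have e1: "zmult (m+i) a = zmult (m+(i-1)) a + a" using zmult_succ[of "m+(i-1)" a] by simp
  have e2: "zmult i a = zmult (i-1) a + a" using zmult_succ[of "i-1" a] by simp
  show ?case using step2 e1 e2 by (simp add: algebra_simps)
qed

lemma zmult_neg: "zmult (-k) a = - zmult k a"
  using zmult_add[of "-k" k a] by (simp add: eq_neg_iff_add_eq_0)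

lemma subgroup_zmult:
  assumes "is_subgroup_add H" "a \<in> H" shows "zmult k a \<in> H"
proof (induction k rule: int_induct[where k=0])
  case base then show ?case using assms by (simp add: is_subgroup_add_def)
next
  case (step1 i) then show ?case using assms by (simp add: zmult_succ is_subgroup_add_def)
next
  case (step2 i)
  have e: "zmult (i-1) a = zmult i a + (- a)" using zmult_succ[of "i-1" a] by simp
  have "zmult i a + (- a) \<in> H" using assms step2 unfolding is_subgroup_add_def by blast
  then show ?case using e by simp
qed

lemma subgroup_sum:
  assumes "is_subgroup_add H" "finite G" "\<And>x. x \<in> G \<Longrightarrow> f x \<in> H" shows "sum f G \<in> H"
  using assms(2,3)
proof (induction G rule: finite_induct)
  case empty then show ?case using assms(1) by (simp add: is_subgroup_add_def)
next
  case (insert x F) then show ?case using assms(1) by (simp add: is_subgroup_add_def)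
qed

lemma subgroup_generated_sub:
  assumes "is_subgroup_add H" "X \<subseteq> H" shows "subgroup_generated X \<subseteq> H"
  using assms unfolding subgroup_generated_def by blast

lemma subgroup_generated_is: "is_subgroup_add (subgroup_generated X)"
  unfolding subgroup_generated_def is_subgroup_add_def by blast

lemma subgroup_generated_base: "X \<subseteq> subgroup_generated X"
  unfolding subgroup_generated_def by blast

lemma sum_in_generated:
  assumes "finite G" "G \<subseteq> X" shows "(\<Sum>a\<in>G. zmult (w a) a) \<in> subgroup_generated X"
  using assms subgroup_generated_is subgroup_generated_base
  by (intro subgroup_sum subgroup_zmult) auto

definition Rep :: "'a::ab_group_add set \<Rightarrow> 'a set" where
  "Rep X = {y. \<exists>G w. finite G \<and> G \<subseteq> X \<and> y = (\<Sum>a\<in>G. zmult (w a) a)}"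

lemma sum_extend:
  assumes "finite G" "G \<subseteq> K" "finite K"
  shows "(\<Sum>a\<in>G. zmult (w a) a) = (\<Sum>a\<in>K. zmult (if a \<in> G then w a else 0) a)"
proof -
  have "(\<Sum>a\<in>K. zmult (if a \<in> G then w a else 0) a) = (\<Sum>a\<in>G. zmult (if a \<in> G then w a else 0) a)"
    using assms by (intro sum.mono_neutral_right) auto
  then show ?thesis by simp
qed

lemma Rep_subgroup: "is_subgroup_add (Rep X)"
  unfolding is_subgroup_add_def
proof (intro conjI ballI)
  show "0 \<in> Rep X" unfolding Rep_def by (rule CollectI, rule exI[of _ "{}"]) auto
next
  fix x y assume "x \<in> Rep X" "y \<in> Rep X"
  then obtain G w H v where G: "finite G" "G \<subseteq> X" "x = (\<Sum>a\<in>G. zmult (w a) a)"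
    and H: "finite H" "H \<subseteq> X" "y = (\<Sum>a\<in>H. zmult (v a) a)" unfolding Rep_def by blast
  let ?K = "G \<union> H"
  let ?u = "\<lambda>a. (if a \<in> G then w a else 0) + (if a \<in> H then v a else 0)"
  have "x + y = (\<Sum>a\<in>?K. zmult (if a \<in> G then w a else 0) a) + (\<Sum>a\<in>?K. zmult (if a \<in> H then v a else 0) a)"
    using G H sum_extend[of G ?K w] sum_extend[of H ?K v] by simp
  also have "\<dots> = (\<Sum>a\<in>?K. zmult (?u a) a)" by (simp only: zmult_add sum.distrib)
  finally have "x + y = (\<Sum>a\<in>?K. zmult (?u a) a)" .
  then show "x + y \<in> Rep X" unfolding Rep_def using G H
    by (intro CollectI exI[of _ ?K] exI[of _ ?u]) auto
next
  fix x assume "x \<in> Rep X"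
  then obtain G w where G: "finite G" "G \<subseteq> X" "x = (\<Sum>a\<in>G. zmult (w a) a)" unfolding Rep_def by blast
  then have "- x = (\<Sum>a\<in>G. zmult (- w a) a)" by (simp add: zmult_neg sum_negf)
  then show "- x \<in> Rep X" unfolding Rep_def using G
    by (intro CollectI exI[of _ G] exI[of _ "\<lambda>a. - w a"]) auto
qed

lemma Rep_base: "X \<subseteq> Rep X"
proof
  fix a assume "a \<in> X"
  then show "a \<in> Rep X" unfolding Rep_def
    by (intro CollectI exI[of _ "{a}"] exI[of _ "\<lambda>_. 1"]) auto
qed

lemma generated_rep:
  assumes "x \<in> subgroup_generated X"
  shows "\<exists>G w. finite G \<and> G \<subseteq> X \<and> x = (\<Sum>a\<in>G. zmult (w a) a)"
  using subgroup_generated_sub[OF Rep_subgroup Rep_base] assms unfolding Rep_def by blast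

lemma sub_nhd:
  fixes U :: "'a::topological_ab_group_add set"
  assumes "open U" "0 \<in> U"
  shows "\<exists>V. open V \<and> 0 \<in> V \<and> (\<forall>x\<in>V. \<forall>y\<in>V. x - y \<in> U)"
proof -
  have f: "((\<lambda>p. fst p) \<longlongrightarrow> fst ((0::'a),(0::'a))) (nhds ((0::'a), (0::'a)))"
    by (rule tendsto_fst) (rule filterlim_ident)
  have s: "((\<lambda>p. snd p) \<longlongrightarrow> snd ((0::'a),(0::'a))) (nhds ((0::'a), (0::'a)))"
    by (rule tendsto_snd) (rule filterlim_ident)
  have "((\<lambda>p. fst p - snd p) \<longlongrightarrow> (0::'a) - 0) (nhds ((0::'a), (0::'a)))"
    using tendsto_diff[OF f s] by simp
  then have "eventually (\<lambda>p. fst p - snd p \<in> U) (nhds ((0::'a), (0::'a)))"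
    using assms by (simp add: tendsto_def)
  then have "eventually (\<lambda>(x,y). x - y \<in> U) (nhds (0::'a) \<times>\<^sub>F nhds 0)"
    by (simp add: nhds_prod case_prod_unfold)
  then obtain Q where Q: "eventually Q (nhds 0)" "\<And>x y. Q x \<Longrightarrow> Q y \<Longrightarrow> x - y \<in> U"
    unfolding eventually_prod_same by auto
  then obtain S where S: "open S" "0 \<in> S" "\<forall>x\<in>S. Q x" unfolding eventually_nhds by auto
  show ?thesis
  proof (intro exI[of _ S] conjI ballI)
    fix x y assume "x \<in> S" "y \<in> S"
    then show "x - y \<in> U" using S(3) Q(2) by simp
  qed (use S in auto)
qed

lemma diff_in_generated:
  assumes "finite E" "finite E'" "F0 \<subseteq> E" "F0 \<subseteq> E'" "E \<subseteq> A" "E' \<subseteq> A"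
  shows "(\<Sum>a\<in>E. zmult (z a) a) - (\<Sum>a\<in>E'. zmult (z a) a) \<in> subgroup_generated (A - F0)"
proof -
  have 1: "(\<Sum>a\<in>E. zmult (z a) a) = (\<Sum>a\<in>E \<inter> E'. zmult (z a) a) + (\<Sum>a\<in>E - E'. zmult (z a) a)"
    using assms by (simp add: sum.Int_Diff)
  have 2: "(\<Sum>a\<in>E'. zmult (z a) a) = (\<Sum>a\<in>E' \<inter> E. zmult (z a) a) + (\<Sum>a\<in>E' - E. zmult (z a) a)"
    using assms by (simp add: sum.Int_Diff)
  have x: "(\<Sum>a\<in>E - E'. zmult (z a) a) \<in> subgroup_generated (A - F0)"
    using assms by (intro sum_in_generated) auto
  have y: "(\<Sum>a\<in>E' - E. zmult (z a) a) \<in> subgroup_generated (A - F0)"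
    using assms by (intro sum_in_generated) auto
  have "(\<Sum>a\<in>E - E'. zmult (z a) a) + - (\<Sum>a\<in>E' - E. zmult (z a) a) \<in> subgroup_generated (A - F0)"
    using x y subgroup_generated_is[of "A - F0"] unfolding is_subgroup_add_def by blast
  moreover have "E \<inter> E' = E' \<inter> E" by blast
  ultimately show ?thesis using 1 2 by (simp add: algebra_simps)
qed

lemma part2:
  fixes A :: "'a::topological_ab_group_add set"
  assumes comp: "group_complete TYPE('a)" and acs: "absolutely_Cauchy_summable A"
  shows "absolutely_summable A"
  unfolding absolutely_summable_def
proof
  fix z :: "'a \<Rightarrow> int"
  define S where "S = (\<lambda>E. \<Sum>a\<in>E. zmult (z a) a)"
  define Fl where "Fl = filtermap S (finite_subsets_at_top A)"
  have nb: "Fl \<noteq> bot" unfolding Fl_def by (simp add: filtermap_bot_iff)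
  have cau: "group_Cauchy_filter Fl"
    unfolding group_Cauchy_filter_def
  proof (intro allI impI)
    fix U :: "'a set" assume U: "open U \<and> 0 \<in> U"
    then obtain F0 where F0: "finite F0" "F0 \<subseteq> A" "subgroup_generated (A - F0) \<subseteq> U"
      using acs unfolding absolutely_Cauchy_summable_def by blast
    let ?Q = "\<lambda>E. finite E \<and> F0 \<subseteq> E \<and> E \<subseteq> A"
    have Q: "eventually ?Q (finite_subsets_at_top A)"
      unfolding eventually_finite_subsets_at_top using F0 by blast
    have "eventually (\<lambda>(E, E'). S E - S E' \<in> U) (finite_subsets_at_top A \<times>\<^sub>F finite_subsets_at_top A)"
      unfolding eventually_prod_same
    proof (rule exI[of _ ?Q], intro conjI Q allI impI)
      fix x y assume x: "?Q x" and y: "?Q y"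
      have "S x - S y \<in> subgroup_generated (A - F0)"
        unfolding S_def using x y by (intro diff_in_generated) auto
      then show "(\<lambda>(E, E'). S E - S E' \<in> U) (x, y)" using F0(3) by auto
    qed
    then show "eventually (\<lambda>(x, y). x - y \<in> U) (Fl \<times>\<^sub>F Fl)"
      unfolding Fl_def prod_filtermap1 prod_filtermap2 eventually_filtermap
      by (simp add: case_prod_unfold)
  qed
  obtain g where g: "Fl \<le> nhds g" using comp nb cau unfolding group_complete_def by blast
  show "\<exists>g. \<forall>U. open U \<and> 0 \<in> U \<longrightarrow> (\<exists>F. finite F \<and> F \<subseteq> A \<and>
           (\<forall>E. finite E \<and> F \<subseteq> E \<and> E \<subseteq> A \<longrightarrow> g - (\<Sum>a\<in>E. zmult (z a) a) \<in> U))"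
  proof (intro exI[of _ g] allI impI)
    fix U :: "'a set" assume U: "open U \<and> 0 \<in> U"
    have "((\<lambda>x. g - x) \<longlongrightarrow> g - g) (nhds g)"
      by (intro tendsto_diff tendsto_const filterlim_ident)
    then have "eventually (\<lambda>x. g - x \<in> U) (nhds g)" using U by (simp add: tendsto_def)
    then have "eventually (\<lambda>x. g - x \<in> U) Fl" by (rule filter_leD[OF g])
    then have "eventually (\<lambda>E. g - S E \<in> U) (finite_subsets_at_top A)"
      unfolding Fl_def eventually_filtermap .
    then show "\<exists>F. finite F \<and> F \<subseteq> A \<and>
           (\<forall>E. finite E \<and> F \<subseteq> E \<and> E \<subseteq> A \<longrightarrow> g - (\<Sum>a\<in>E. zmult (z a) a) \<in> U)"
      unfolding eventually_finite_subsets_at_top S_def .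
  qed
qed

lemma part1:
  fixes A :: "'a::topological_ab_group_add set"
  assumes as: "absolutely_summable A"
  shows "absolutely_Cauchy_summable A"
  unfolding absolutely_Cauchy_summable_def
proof (intro allI impI)
  fix U :: "'a set" assume U: "open U \<and> 0 \<in> U"
  show "\<exists>F. finite F \<and> F \<subseteq> A \<and> subgroup_generated (A - F) \<subseteq> U"
  proof (rule ccontr)
    assume neg: "\<not> ?thesis"
    have ex: "\<forall>F. \<exists>p. finite F \<and> F \<subseteq> A \<longrightarrow>
        (finite (fst p) \<and> fst p \<subseteq> A - F \<and> (\<Sum>a\<in>fst p. zmult (snd p a) a) \<notin> U)"
    proof
      fix F
      show "\<exists>p. finite F \<and> F \<subseteq> A \<longrightarrow>
        (finite (fst p) \<and> fst p \<subseteq> A - F \<and> (\<Sum>a\<in>fst p. zmult (snd p a) a) \<notin> U)"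
      proof (cases "finite F \<and> F \<subseteq> A")
        case True
        then have "\<not> subgroup_generated (A - F) \<subseteq> U" using neg by blast
        then obtain x where x: "x \<in> subgroup_generated (A - F)" "x \<notin> U" by blast
        obtain G w where Gw: "finite G" "G \<subseteq> A - F" "x = (\<Sum>a\<in>G. zmult (w a) a)"
          using generated_rep[OF x(1)] by blast
        have "finite (fst (G, w)) \<and> fst (G, w) \<subseteq> A - F \<and> (\<Sum>a\<in>fst (G, w). zmult (snd (G, w) a) a) \<notin> U"
          using Gw x(2) by simp
        then show ?thesis by (rule exI[of _ "(G, w)", OF impI])
      next
        case False
        then show ?thesis by blast
      qed
    qed
    obtain c where c0: "\<forall>F. finite F \<and> F \<subseteq> A \<longrightarrow>
        (finite (fst (c F)) \<and> fst (c F) \<subseteq> A - F \<and> (\<Sum>a\<in>fst (c F). zmult (snd (c F) a) a) \<notin> U)"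
      using choice[OF ex] by blast
    have c: "finite (fst (c F)) \<and> fst (c F) \<subseteq> A - F \<and> (\<Sum>a\<in>fst (c F). zmult (snd (c F) a) a) \<notin> U"
      if "finite F \<and> F \<subseteq> A" for F
      using c0 that by blast
    define T where "T = rec_nat {} (\<lambda>n S. S \<union> fst (c S))"
    have T0: "T 0 = {}" and TS: "\<And>n. T (Suc n) = T n \<union> fst (c (T n))" by (simp_all add: T_def)
    define B where "B n = fst (c (T n))" for n
    define w where "w n = snd (c (T n))" for n
    have Tinv: "finite (T n) \<and> T n \<subseteq> A" for n
    proof (induction n)
      case 0 then show ?case by (simp add: T0)
    next
      case (Suc n) then show ?case using c[of "T n"] by (auto simp: TS)
    qed
    have hB: "finite (B n)" "B n \<subseteq> A - T n" "(\<Sum>a\<in>B n. zmult (w n a) a) \<notin> U" for n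
      using c[OF Tinv[of n]] by (auto simp: B_def w_def)
    have Tmono: "m \<le> n \<Longrightarrow> T m \<subseteq> T n" for m n
      by (rule lift_Suc_mono_le[of T]) (auto simp: TS)
    have disj: "B m \<inter> B n = {}" if "m < n" for m n
    proof -
      have "B m \<subseteq> T (Suc m)" by (simp add: TS B_def)
      also have "\<dots> \<subseteq> T n" using Tmono that by simp
      finally show ?thesis using hB(2)[of n] by blast
    qed
    define z where "z a = w (LEAST n. a \<in> B n) a" for a
    have least: "(LEAST k. a \<in> B k) = n" if "a \<in> B n" for a n
    proof (rule Least_equality)
      show "a \<in> B n" by fact
    next
      fix k assume "a \<in> B k"
      then show "n \<le> k" using disj[of k n] that by (cases "k < n") auto
    qed
    have zB: "a \<in> B n \<Longrightarrow> z a = w n a" for a n using least by (simp add: z_def)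
    have gz: "\<exists>g. \<forall>V. open V \<and> 0 \<in> V \<longrightarrow> (\<exists>F. finite F \<and> F \<subseteq> A \<and>
           (\<forall>E. finite E \<and> F \<subseteq> E \<and> E \<subseteq> A \<longrightarrow> g - (\<Sum>a\<in>E. zmult (z a) a) \<in> V))"
      using as unfolding absolutely_summable_def by (rule allE[of _ z]) assumption
    then obtain g where g: "\<forall>V. open V \<and> 0 \<in> V \<longrightarrow> (\<exists>F. finite F \<and> F \<subseteq> A \<and>
           (\<forall>E. finite E \<and> F \<subseteq> E \<and> E \<subseteq> A \<longrightarrow> g - (\<Sum>a\<in>E. zmult (z a) a) \<in> V))" ..
    obtain V where V: "open V" "0 \<in> V" "\<And>x y. x \<in> V \<Longrightarrow> y \<in> V \<Longrightarrow> x - y \<in> U"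
      using sub_nhd[of U] U by blast
    have "\<exists>F. finite F \<and> F \<subseteq> A \<and>
           (\<forall>E. finite E \<and> F \<subseteq> E \<and> E \<subseteq> A \<longrightarrow> g - (\<Sum>a\<in>E. zmult (z a) a) \<in> V)"
      using g V(1,2) by simp
    then obtain F where F: "finite F" "F \<subseteq> A"
      "\<forall>E. finite E \<and> F \<subseteq> E \<and> E \<subseteq> A \<longrightarrow> g - (\<Sum>a\<in>E. zmult (z a) a) \<in> V"
      by blast
    obtain n where n: "n \<notin> (\<lambda>a. LEAST k. a \<in> B k) ` F"
      using ex_new_if_finite[OF infinite_UNIV_nat] F(1) by blast
    have FB: "F \<inter> B n = {}"
    proof (rule ccontr)
      assume "F \<inter> B n \<noteq> {}"
      then obtain a where "a \<in> F" "a \<in> B n" by blast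
      then show False using n least by force
    qed
    have v1: "g - (\<Sum>a\<in>F. zmult (z a) a) \<in> V" using F(1,2) F(3)[rule_format, of F] by simp
    have v2: "g - (\<Sum>a\<in>F \<union> B n. zmult (z a) a) \<in> V"
      using F(1,2) hB(1,2)[of n] F(3)[rule_format, of "F \<union> B n"] by auto
    have "(\<Sum>a\<in>F \<union> B n. zmult (z a) a) = (\<Sum>a\<in>F. zmult (z a) a) + (\<Sum>a\<in>B n. zmult (z a) a)"
      using F(1) hB(1) FB by (rule sum.union_disjoint)
    also have "(\<Sum>a\<in>B n. zmult (z a) a) = (\<Sum>a\<in>B n. zmult (w n a) a)"
      using zB by (intro sum.cong) auto
    finally have "(g - (\<Sum>a\<in>F. zmult (z a) a)) - (g - (\<Sum>a\<in>F \<union> B n. zmult (z a) a))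
        = (\<Sum>a\<in>B n. zmult (w n a) a)" by simp
    then show False using V(3)[OF v1 v2] hB(3) by simp
  qed
qed

theorem proposition6p5:
  shows "(\<forall>A :: 'a::{topological_ab_group_add, t2_space} set.
           absolutely_summable A \<longrightarrow> absolutely_Cauchy_summable A)
       \<and> (group_complete TYPE('a) \<longrightarrow>
           (\<forall>A :: 'a set. absolutely_Cauchy_summable A \<longrightarrow> absolutely_summable A))"
  using part1 part2 by blast

end
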